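(* (Krieger–Shallit) For every real number $\alpha>1$ there exists an infinite sequence over a finite alphabet whose critical exponent equals $\alpha$.
   Context: If $X$ is a nonempty string and $Y$ is a prefix of $X$ (possibly empty), then any string $Z=X X\cdots X Y$ (one or more copies of $X$ followed by $Y$) is called a fractional power of $X$, and $|Z|/|X|$ is its exponent. The critical exponent of an infinite sequence $\omega$ is the least upper bound of the exponents of all fractional powers that occur as substrings (blocks of consecutive letters) of $\omega$. *)

theory Defs
  imports "HOL-Analysis.Analysis" "HOL-Library.Sublist"
begin

definition frac_power_of :: "'a list \<Rightarrow> 'a list \<Rightarrow> bool" where
  "frac_power_of Z X \<longleftrightarrow> X \<noteq> [] \<and>
     (\<exists>k Y. k \<ge> 1 \<and> prefix Y X \<and> Z = concat (replicate k X) @ Y)"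

definition occurs_in :: "'a list \<Rightarrow> (nat \<Rightarrow> 'a) \<Rightarrow> bool" where
  "occurs_in Z w \<longleftrightarrow> (\<exists>i. Z = map w [i..<i + length Z])"

definition critical_exponent :: "(nat \<Rightarrow> 'a) \<Rightarrow> ereal" where
  "critical_exponent w = Sup {ereal (real (length Z) / real (length X)) | Z X.
      frac_power_of Z X \<and> occurs_in Z w}"

end

theory Submission
  imports Defs
begin


fun oddpart :: "nat \<Rightarrow> nat" where
 "oddpart n = (if n = 0 then 0 else if even n then oddpart (n div 2) else n)"
declare oddpart.simps[simp del]

lemma oddpart_pow: "odd u \<Longrightarrow> oddpart (2^k * u) = u"
proof (induction k)
  case 0 then show ?case by (simp add: oddpart.simps)
next
  case (Suc k)
  have "oddpart (2^Suc k * u) = oddpart (2^k*u)"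
    using Suc.prems by (subst oddpart.simps) (auto simp: mult.assoc)
  then show ?case using Suc by simp
qed

lemma pow2_odd_decomp: "(q::nat) > 0 \<Longrightarrow> \<exists>a q'. q = 2^a * q' \<and> odd q'"
proof (induction q rule: less_induct)
  case (less q)
  show ?case
  proof (cases "even q")
    case True
    then obtain h where h: "q = 2*h" by blast
    with less.prems have "h < q" "h > 0" by auto
    with less.IH obtain a q' where "h = 2^a*q'" "odd q'" by blast
    then show ?thesis using h by (intro exI[of _ "Suc a"] exI[of _ q']) auto
  next
    case False then show ?thesis by (intro exI[of _ 0] exI[of _ q]) auto
  qed
qed

definition ee :: "nat \<Rightarrow> nat \<Rightarrow> nat" where
 "ee r j = (if j = 0 then 2^(r+1) else 2*(j mod 2^r) + (oddpart j div 2^r) mod 2)"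

lemma ee_pos_less: "j > 0 \<Longrightarrow> ee r j < 2^(r+1)"
proof -
  assume "j > 0"
  have "j mod 2^r < 2^r" by simp
  hence "j mod 2^r + 1 \<le> 2^r" by linarith
  moreover have "(oddpart j div 2^r) mod 2 \<le> 1" by simp
  ultimately show ?thesis using \<open>j>0\<close> by (simp add: ee_def)
qed

lemma ee_le: "ee r j \<le> 2^(r+1)"
  using ee_pos_less[of j r] by (cases "j = 0") (auto simp: ee_def)

lemma ee_marker: "ee r j = 2^(r+1) \<longleftrightarrow> j = 0"
  using ee_pos_less[of j r] by (auto simp: ee_def)

lemma ee_eqD: "j > 0 \<Longrightarrow> j' > 0 \<Longrightarrow> ee r j = ee r j' \<Longrightarrow>
   j mod 2^r = j' mod 2^r \<and> (oddpart j div 2^r) mod 2 = (oddpart j' div 2^r) mod 2"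
proof -
  assume a: "j > 0" "j' > 0" "ee r j = ee r j'"
  have h: "\<And>x y b b'::nat. b < 2 \<Longrightarrow> b' < 2 \<Longrightarrow> 2*x+b = 2*y+b' \<Longrightarrow> x = y \<and> b = b'" by arith
  show ?thesis using a h[of "(oddpart j div 2^r) mod 2" "(oddpart j' div 2^r) mod 2" "j mod 2^r" "j' mod 2^r"]
    by (simp add: ee_def)
qed

lemma ee_run:
  assumes r: "r \<ge> 1" and j0: "j0 \<ge> 1" and q: "q = 2^a * q'" and oq: "odd q'"
    and ag: "\<forall>t<R. ee r (j0+t) = ee r (j0+t+q)"
  shows "R * 2^r < 2 * 2^a"
proof (rule ccontr)
  assume "\<not> ?thesis"
  hence big: "2 * 2^a \<le> R * 2^r" by simp
  show False
  proof (cases "a < r")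
    case True
    have "R > 0" using big by (cases R) auto
    with ag have "ee r j0 = ee r (j0 + q)" by auto
    hence "j0 mod 2^r = (j0+q) mod 2^r" using ee_eqD[of j0 "j0+q" r] j0 by auto
    hence "2^r dvd q" using mod_eq_dvd_iff_nat[of j0 "j0+q" "2^r"] by auto
    moreover have "(2::nat)^r = 2^a * 2^(r-a)" using True by (simp add: power_add[symmetric])
    ultimately have "2^(r-a) dvd q'" using q by (simp add: mult_dvd_mono)
    moreover have "(2::nat) dvd 2^(r-a)" using True by simp
    ultimately show False using oq dvd_trans by blast
  next
    case False
    define d where "d = (2::nat)^(a-r)"
    have d2: "(2::nat)^a = d * 2^r" using False by (simp add: d_def power_add[symmetric])
    have dpos: "d > 0" by (simp add: d_def)
    have R2d: "2*d \<le> R" using big d2 by simp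
    define x where "x = j0 + d - 1"
    define m where "m = x div (2*d)"
    define rm where "rm = x mod (2*d)"
    have xe: "2*d*m + rm = x" unfolding m_def rm_def by (metis div_mult_mod_eq mult.commute)
    have rml: "rm < 2*d" unfolding rm_def using dpos by simp
    define j where "j = d * (2*m+1)"
    have jj: "j = x - rm + d" unfolding j_def using xe by (simp add: algebra_simps)
    have jge: "j0 \<le> j" and jlt: "j < j0 + 2*d" using jj xe rml j0 dpos unfolding x_def
      by linarith+
    define t where "t = j - j0"
    have tR: "t < R" using jge jlt R2d unfolding t_def by linarith
    with ag have eq: "ee r j = ee r (j+q)" using jge unfolding t_def by (metis le_add_diff_inverse)
    have jq: "j + q = d * (2*m+1 + 2^r*q')" using q d2 unfolding j_def by (simp add: algebra_simps)
    have jpos: "j > 0" using dpos unfolding j_def by simp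
    have od1: "odd (2*m+1 + 2^r*q')" using r by simp
    obtain a' where a': "d = 2^a'" unfolding d_def by blast
    have op1: "oddpart j = 2*m+1" unfolding j_def a' by (rule oddpart_pow) simp
    have op2: "oddpart (j+q) = 2*m+1 + 2^r*q'" unfolding jq a' by (rule oddpart_pow) (rule od1)
    from ee_eqD[OF jpos _ eq] jpos
    have "(oddpart j div 2^r) mod 2 = (oddpart (j+q) div 2^r) mod 2" by simp
    moreover have "(2*m+1 + 2^r*q') div 2^r = (2*m+1) div 2^r + q'"
      by (metis add.commute div_mult_self2 power_not_zero zero_neq_numeral)
    ultimately have "((2*m+1) div 2^r) mod 2 = ((2*m+1) div 2^r + q') mod 2"
      using op1 op2 by simp
    moreover have "\<forall>z::nat. odd q' \<longrightarrow> z mod 2 \<noteq> (z+q') mod 2" by presburger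
    ultimately show False using oq by blast
  qed
qed




locale cx =
  fixes \<alpha> :: real and N :: nat
  assumes a1: "\<alpha> > 1" and N1: "2^N > \<alpha>" and N2: "(\<alpha>-1)*2^N \<ge> 2*\<alpha>" and Npos: "N \<ge> 1"
begin

definition P :: "nat \<Rightarrow> nat" where "P k = 2^(N*k)"
definition L :: "nat \<Rightarrow> nat" where "L k = nat \<lfloor>\<alpha> * real (P k)\<rfloor>"
definition S :: "nat \<Rightarrow> nat" where "S k = (\<Sum>j<k. L j)"
definition win :: "nat \<Rightarrow> nat" where "win n = (LEAST k. n < S (Suc k))"
definition wd :: "nat \<Rightarrow> nat" where
  "wd n = 2 * ee N ((n - S (win n)) mod P (win n)) + win n mod 2"

lemma P_pos: "P k \<ge> 1" by (simp add: P_def)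
lemma P_Suc: "P (Suc k) = 2^N * P k" by (simp add: P_def power_add)

lemma L_ge_P: "P k \<le> L k"
proof -
  have "1 * real (P k) \<le> \<alpha> * real (P k)" using a1 by (intro mult_right_mono) auto
  hence "real (P k) \<le> \<alpha> * real (P k)" by simp
  hence "int (P k) \<le> \<lfloor>\<alpha> * real (P k)\<rfloor>" by (simp add: le_floor_iff)
  thus ?thesis unfolding L_def by linarith
qed

lemma L_real: "real (L k) = of_int \<lfloor>\<alpha> * real (P k)\<rfloor>"
proof -
  have "0 \<le> \<lfloor>\<alpha> * real (P k)\<rfloor>" using a1 by simp
  thus ?thesis unfolding L_def by simp
qed

lemma L_le: "real (L k) \<le> \<alpha> * real (P k)"
  unfolding L_real by simp

lemma L_gt: "\<alpha> * real (P k) - 1 < real (L k)"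
  unfolding L_real by linarith

lemma L_pos: "L k \<ge> 1" using L_ge_P[of k] P_pos[of k] by simp
lemma L_pos': "L k > 0" using L_pos[of k] by simp

lemma L_Suc_gt: "L k < L (Suc k)"
proof -
  have "real (L k) \<le> \<alpha> * P k" by (rule L_le)
  also have "\<dots> < 2^N * P k" using N1 P_pos[of k] by simp
  also have "\<dots> = real (P (Suc k))" by (simp add: P_Suc)
  also have "\<dots> \<le> L (Suc k)" using L_ge_P by simp
  finally show ?thesis by simp
qed

lemma L_growth: "2 * real (L k) \<le> (\<alpha>-1) * real (L (Suc k))"
proof -
  have "2 * real (L k) \<le> 2 * \<alpha> * P k" using L_le[of k] by simp
  also have "\<dots> \<le> (\<alpha>-1) * 2^N * P k" using N2 by (intro mult_right_mono) auto
  also have "\<dots> = (\<alpha>-1) * real (P (Suc k))" by (simp add: P_Suc)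
  also have "\<dots> \<le> (\<alpha>-1) * real (L (Suc k))" using a1 L_ge_P by (intro mult_left_mono) auto
  finally show ?thesis .
qed

lemma L_smono: "strict_mono L"
  by (rule strict_monoI_Suc) (rule L_Suc_gt)

lemma L_mono: "k \<le> j \<Longrightarrow> L k \<le> L j"
  using L_smono strict_mono_less_eq by blast

lemma S_Suc: "S (Suc k) = S k + L k" by (simp add: S_def)

lemma S_smono: "strict_mono S"
  by (rule strict_monoI_Suc) (simp add: S_Suc L_pos')

lemma S_less: "k < j \<Longrightarrow> S k < S j" using S_smono strict_mono_less by blast
lemma S_le: "k \<le> j \<Longrightarrow> S k \<le> S j" using S_smono strict_mono_less_eq by blast

lemma S_ge: "k \<le> S k"
  by (induction k) (simp_all add: S_Suc, metis L_pos add_mono Suc_eq_plus1)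

lemma win_ex: "\<exists>k. n < S (Suc k)"
  using S_ge[of "Suc n"] by (intro exI[of _ n]) simp

lemma win_upper: "n < S (Suc (win n))"
  unfolding win_def using LeastI_ex[OF win_ex] .

lemma win_least: "n < S (Suc k) \<Longrightarrow> win n \<le> k"
  unfolding win_def by (rule Least_le)

lemma win_lower: "S (win n) \<le> n"
proof (cases "win n")
  case 0 then show ?thesis by (simp add: S_def)
next
  case (Suc k)
  have "\<not> n < S (Suc k)"
  proof
    assume "n < S (Suc k)" then have "win n \<le> k" by (rule win_least)
    with Suc show False by simp
  qed
  with Suc show ?thesis by simp
qed

lemma win_ge: "S k \<le> n \<Longrightarrow> k \<le> win n"
proof (rule ccontr)
  assume a: "S k \<le> n" "\<not> k \<le> win n"
  hence "S (Suc (win n)) \<le> S k" by (intro S_le) simp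
  with a win_upper[of n] show False by simp
qed

lemma win_eq: "S k \<le> n \<Longrightarrow> n < S (Suc k) \<Longrightarrow> win n = k"
  using win_ge win_least by (simp add: le_antisym)

lemma win_mono: "n \<le> m \<Longrightarrow> win n \<le> win m"
  using win_ge win_lower order_trans by blast

lemma win_start: assumes "win n \<noteq> win (Suc n)" shows "Suc n = S (win (Suc n))"
proof -
  have "win n < win (Suc n)" using assms win_mono[of n "Suc n"] by simp
  show ?thesis
  proof (rule ccontr)
    assume "Suc n \<noteq> S (win (Suc n))"
    hence "S (win (Suc n)) \<le> n" using win_lower[of "Suc n"] by simp
    hence "win (Suc n) \<le> win n" by (rule win_ge)
    with \<open>win n < win (Suc n)\<close> show False by simp
  qed
qed

lemma wd_bound: "wd n \<le> 2 * 2^(N+1) + 1"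
proof -
  have "ee N ((n - S (win n)) mod P (win n)) \<le> 2^(N+1)" by (rule ee_le)
  moreover have "win n mod 2 \<le> 1" by simp
  ultimately show ?thesis unfolding wd_def by simp
qed

lemma wd_eqD: "wd n = wd m \<Longrightarrow>
   ee N ((n - S (win n)) mod P (win n)) = ee N ((m - S (win m)) mod P (win m)) \<and> win n mod 2 = win m mod 2"
proof -
  assume a: "wd n = wd m"
  have h: "\<And>x y b b'::nat. b < 2 \<Longrightarrow> b' < 2 \<Longrightarrow> 2*x+b = 2*y+b' \<Longrightarrow> x = y \<and> b = b'" by arith
  show ?thesis using a h by (simp add: wd_def)
qed

end



lemma odd_diff_aux: "even (x::nat) \<Longrightarrow> odd y \<Longrightarrow> y < x \<Longrightarrow> odd (x - y)"
  by presburger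

context cx begin

lemma within_window:
  assumes p: "p \<ge> 1" and ag: "\<forall>t<R. wd (i+t) = wd (i+t+p)"
    and wk: "\<forall>t<R. win (i+t) = k \<and> win (i+t+p) = k" and nd: "\<not> P k dvd p"
  shows "R * 2^N < 2 * p"
proof (cases "R = 0")
  case True then show ?thesis using p by simp
next
  case False
  define s where "s = S k"
  define Q where "Q = P k"
  define X where "X t = (i + t - s) mod Q" for t
  define Y where "Y t = (i + t + p - s) mod Q" for t
  define c where "c = p mod Q"
  have Qpos: "Q > 0" using P_pos[of k] unfolding Q_def by simp
  have cpos: "c > 0" using nd unfolding c_def Q_def by (simp add: dvd_eq_mod_eq_0)
  have cQ: "c < Q" unfolding c_def using Qpos by simp
  have cp: "c \<le> p" unfolding c_def by simp
  have ge: "s \<le> i + t" if "t < R" for t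
    using win_lower[of "i+t"] wk that unfolding s_def by auto
  have ee_eq: "ee N (X t) = ee N (Y t)" if "t < R" for t
    using wd_eqD[OF ag[rule_format, OF that]] wk that unfolding X_def Y_def s_def Q_def by auto
  have YX: "Y t = (X t + c) mod Q" if "t < R" for t
  proof -
    have "i + t + p - s = (i + t - s) + p" using ge[OF that] by simp
    thus ?thesis unfolding X_def Y_def c_def by (simp add: mod_add_eq)
  qed
  have nz: "X t \<noteq> 0 \<and> Y t \<noteq> 0" if "t < R" for t
  proof
    show X0: "X t \<noteq> 0"
    proof
      assume "X t = 0"
      hence "Y t = c" using YX[OF that] cQ by simp
      hence "ee N (Y t) \<noteq> 2^(N+1)" using cpos ee_marker by simp
      moreover have "ee N (X t) = 2^(N+1)" using \<open>X t = 0\<close> ee_marker by simp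
      ultimately show False using ee_eq[OF that] by simp
    qed
    show "Y t \<noteq> 0"
    proof
      assume "Y t = 0"
      hence "ee N (X t) = 2^(N+1)" using ee_eq[OF that] ee_marker by simp
      with X0 ee_marker show False by simp
    qed
  qed
  have Xs: "X t = X 0 + t" if "t < R" for t
    using that
  proof (induction t)
    case 0 then show ?case by simp
  next
    case (Suc t)
    have "i + Suc t - s = Suc (i + t - s)" using ge[of t] Suc.prems by simp
    hence "X (Suc t) = Suc (i + t - s) mod Q" unfolding X_def by simp
    also have "\<dots> = (if Suc (X t) = Q then 0 else Suc (X t))" unfolding X_def by (rule mod_Suc)
    finally have "X (Suc t) = (if Suc (X t) = Q then 0 else Suc (X t))" .
    with nz[OF Suc.prems] Suc show ?case by (auto split: if_splits)
  qed
  have Ys: "Y t = Y 0 + t" if "t < R" for t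
    using that
  proof (induction t)
    case 0 then show ?case by simp
  next
    case (Suc t)
    have "i + Suc t + p - s = Suc (i + t + p - s)" using ge[of t] Suc.prems by simp
    hence "Y (Suc t) = Suc (i + t + p - s) mod Q" unfolding Y_def by simp
    also have "\<dots> = (if Suc (Y t) = Q then 0 else Suc (Y t))" unfolding Y_def by (rule mod_Suc)
    finally have "Y (Suc t) = (if Suc (Y t) = Q then 0 else Suc (Y t))" .
    with nz[OF Suc.prems] Suc show ?case by (auto split: if_splits)
  qed
  have R0: "0 < R" using False by simp
  have X0pos: "X 0 \<ge> 1" and Y0pos: "Y 0 \<ge> 1" using nz[OF R0] by auto
  have X0Q: "X 0 < Q" unfolding X_def using Qpos by simp
  obtain a c' where cd: "c = 2^a * c'" and oc: "odd c'" using pow2_odd_decomp[OF cpos] by blast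
  have aQ: "a < N*k"
  proof (rule ccontr)
    assume "\<not> a < N*k"
    hence "(2::nat)^(N*k) dvd 2^a" by (simp add: le_imp_power_dvd)
    hence "Q dvd c" unfolding Q_def P_def cd by (simp add: dvd_mult2)
    with cpos cQ show False using dvd_imp_le by fastforce
  qed
  have c'pos: "c' \<ge> 1" using oc by (cases c') auto
  have ac: "2^a \<le> c" unfolding cd using c'pos by simp
  have main: "R * 2^N < 2 * 2^a"
  proof (cases "X 0 + c < Q")
    case True
    hence Y0: "Y 0 = X 0 + c" using YX[OF R0] by simp
    show ?thesis
    proof (rule ee_run[OF Npos X0pos cd oc], intro allI impI)
      fix t assume "t < R"
      thus "ee N (X 0 + t) = ee N (X 0 + t + c)"
        using ee_eq[of t] Xs[of t] Ys[of t] Y0 by (simp add: algebra_simps)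
    qed
  next
    case False
    hence Y0: "Y 0 + (Q - c) = X 0" using YX[OF R0] X0Q cQ
      by (simp add: mod_if split: if_splits)
    have Qd: "Q - c = 2^a * (2^(N*k - a) - c')"
    proof -
      have "Q = 2^a * 2^(N*k-a)" unfolding Q_def P_def using aQ by (simp add: power_add[symmetric])
      thus ?thesis unfolding cd by (simp add: diff_mult_distrib2)
    qed
    have "2^a * c' < 2^a * 2^(N*k - a)" using cQ aQ unfolding cd Q_def P_def
      by (simp add: power_add[symmetric])
    hence "c' < 2^(N*k-a)" by simp
    moreover have "even ((2::nat)^(N*k-a))" using aQ by simp
    ultimately have od: "odd (2^(N*k - a) - c')" using oc odd_diff_aux by blast
    show ?thesis
    proof (rule ee_run[OF Npos Y0pos Qd od], intro allI impI)
      fix t assume "t < R"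
      thus "ee N (Y 0 + t) = ee N (Y 0 + t + (Q - c))"
        using ee_eq[of t] Xs[of t] Ys[of t] Y0 by (simp add: algebra_simps)
    qed
  qed
  show ?thesis using main ac cp by linarith
qed

end



context cx begin

lemma win_in: "S k \<le> n \<Longrightarrow> n < S k + L k \<Longrightarrow> win n = k"
  using win_eq S_Suc by simp

lemma alpha_2: "2 \<le> (\<alpha> - 1) * 2^N" using N2 a1 by linarith

lemma run_bound:
  assumes p: "p \<ge> 1" and ag: "\<forall>t<R. wd (i+t) = wd (i+t+p)"
  shows "real R + real p \<le> \<alpha> * real p"
proof (cases "R = 0")
  case True
  have "1 * real p \<le> \<alpha> * real p" using a1 by (intro mult_right_mono) auto
  then show ?thesis using True by simp
next
  case False
  have agn: "wd n = wd (n+p)" if "i \<le> n" "n < i + R" for n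
    using ag[rule_format, of "n - i"] that by simp
  have par: "win n mod 2 = win (n+p) mod 2" if "i \<le> n" "n < i + R" for n
    using wd_eqD[OF agn[OF that]] by simp
  define k where "k = win i"
  define k' where "k' = win (i+p)"
  have ik: "S k \<le> i" "i < S k + L k" using win_lower[of i] win_upper[of i] S_Suc unfolding k_def by auto
  have kk': "k \<le> k'" unfolding k_def k'_def by (rule win_mono) simp
  have pk: "k mod 2 = k' mod 2" using par[of i] False unfolding k_def k'_def by simp
  have alpha1: "\<alpha> - 1 > 0" using a1 by simp
  show ?thesis
  proof (cases "k' = k")
    case True
    have inW: "i + t + p < S k + L k" if "t < R" for t
      using that
    proof (induction t)
      case 0 then show ?case using win_upper[of "i+p"] S_Suc True unfolding k'_def by simp
    next
      case (Suc t)
      show ?case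
      proof (rule ccontr)
        assume "\<not> ?case"
        hence eq: "i + Suc t + p = S (Suc k)" using Suc S_Suc by simp
        have "win (i + Suc t + p) = Suc k"
          using eq S_Suc[of "Suc k"] L_pos'[of "Suc k"] by (intro win_in) auto
        moreover have "win (i + Suc t) = k" using eq ik S_Suc p by (intro win_in) auto
        moreover have "win (i + Suc t) mod 2 = win (i + Suc t + p) mod 2" using par[of "i + Suc t"] Suc by simp
        ultimately show False by presburger
      qed
    qed
    have wk: "\<forall>t<R. win (i+t) = k \<and> win (i+t+p) = k"
  proof (intro allI impI conjI)
      fix t assume t: "t < R"
      show "win (i+t) = k" using inW[OF t] ik by (intro win_in) auto
      show "win (i+t+p) = k" using inW[OF t] ik by (intro win_in) auto
    qed
    have RpL: "R + p \<le> L k" using inW[of "R-1"] False ik by simp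
    show ?thesis
    proof (cases "P k dvd p")
      case True
      hence "P k \<le> p" using p by (simp add: dvd_imp_le)
      have "real R + real p \<le> real (L k)" using RpL by linarith
      also have "\<dots> \<le> \<alpha> * P k" by (rule L_le)
      also have "\<dots> \<le> \<alpha> * p" using a1 \<open>P k \<le> p\<close> by simp
      finally show ?thesis .
    next
      case nd: False
      have "R * 2^N < 2 * p" by (rule within_window[OF p ag wk nd])
      hence "real (R * 2^N) < real (2 * p)" by (simp only: of_nat_less_iff)
      hence "real R * 2^N < 2 * real p" by simp
      also have "\<dots> \<le> (\<alpha> - 1) * 2^N * real p" using alpha_2 by (intro mult_right_mono) auto
      also have "\<dots> = ((\<alpha> - 1) * real p) * 2^N" by (simp add: algebra_simps)
      finally have "real R < (\<alpha> - 1) * real p" by (rule mult_right_less_imp_less) simp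
      thus ?thesis by (simp add: algebra_simps)
    qed
  next
    case False2: False
    have k2: "k + 2 \<le> k'" using kk' False2 pk by presburger
    have "S (k+2) \<le> S k'" using k2 by (rule S_le)
    also have "S k' \<le> i + p" using win_lower[of "i+p"] unfolding k'_def .
    finally have ip: "S (k+2) \<le> i + p" .
    have S2: "S (k+2) = S k + L k + L (Suc k)" by (simp add: S_Suc)
    have gL: "2 * real (L k) \<le> (\<alpha>-1) * real (L (Suc k))" by (rule L_growth)
    have gL2: "2 * real (L (Suc k)) \<le> (\<alpha>-1) * real (L (Suc (Suc k)))" by (rule L_growth)
    have LL: "L k \<le> L (Suc k)" by (rule L_mono) simp
    show ?thesis
    proof (cases "R \<le> S k + L k - i")
      case True
      have p1: "L (Suc k) \<le> p" using ip ik S2 by simp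
      have "2 * real R \<le> 2 * real (L k)" using True ik by simp
      also have "\<dots> \<le> (\<alpha>-1) * real (L (Suc k))" by (rule gL)
      also have "\<dots> \<le> (\<alpha>-1) * real p" using alpha1 p1 by simp
      finally show ?thesis using alpha1 p by (simp add: algebra_simps)
    next
      case False3: False
      define u where "u = S k + L k"
      have u1: "i \<le> u - 1" "u - 1 < i + R" "i \<le> u" "u < i + R" using False3 ik unfolding u_def by auto
      have wu1: "win (u - 1) = k" using ik L_pos'[of k] unfolding u_def by (intro win_in) auto
      have wu: "win u = Suc k" using S_Suc[of "Suc k"] L_pos'[of "Suc k"] unfolding u_def
        by (intro win_in) (auto simp: S_Suc)
      have "win (u - 1 + p) mod 2 \<noteq> win (u + p) mod 2"
        using par[OF u1(1,2)] par[OF u1(3,4)] wu1 wu by presburger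
      moreover have su: "Suc (u - 1 + p) = u + p" using ik unfolding u_def by simp
      ultimately have neq: "win (u - 1 + p) \<noteq> win (Suc (u - 1 + p))" by auto
      define j where "j = win (u + p)"
      have uj: "u + p = S j" using win_start[OF neq] u1 ik unfolding j_def u_def by simp
      have jpar: "j mod 2 = Suc k mod 2" using par[OF u1(3,4)] wu unfolding j_def by simp
      have "k' \<le> j" unfolding k'_def j_def using u1 by (intro win_mono) simp
      hence j3: "k + 3 \<le> j" using k2 jpar pk by presburger
      have "S (k+3) \<le> S j" using j3 by (rule S_le)
      moreover have "k + 3 = Suc (Suc (Suc k))" by simp
      ultimately have "S (Suc (Suc (Suc k))) \<le> S j" by metis
      hence p2: "L (Suc (Suc k)) \<le> p" using uj by (simp add: S_Suc u_def)
      show ?thesis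
      proof (cases "R \<le> S (k+2) - i")
        case True
        have "2 * real R \<le> 2 * (real (L k) + real (L (Suc k)))" using True ik S2 by simp
        also have "\<dots> \<le> 2 * (2 * real (L (Suc k)))" using LL by simp
        also have "\<dots> \<le> 2 * ((\<alpha>-1) * real (L (Suc (Suc k))))" using gL2 by simp
        also have "\<dots> \<le> 2 * ((\<alpha>-1) * real p)" using alpha1 p2 by simp
        finally show ?thesis using alpha1 p by (simp add: algebra_simps)
      next
        case False4: False
        define u2 where "u2 = S (k+2)"
        have v1: "i \<le> u2 - 1" "u2 - 1 < i + R" "i \<le> u2" "u2 < i + R"
          using False4 ik S2 L_pos'[of k] unfolding u2_def by auto
        have wv1: "win (u2 - 1) = Suc k" using S2 L_pos'[of "Suc k"] unfolding u2_def
          by (intro win_in) (auto simp: S_Suc)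
        have wv: "win u2 = Suc (Suc k)" using L_pos'[of "Suc (Suc k)"] unfolding u2_def
          by (intro win_in) (auto simp: S_Suc)
        have "win (u2 - 1 + p) mod 2 \<noteq> win (u2 + p) mod 2"
          using par[OF v1(1,2)] par[OF v1(3,4)] wv1 wv by presburger
        moreover have "Suc (u2 - 1 + p) = u2 + p" using ik S2 unfolding u2_def by simp
        ultimately have neq2: "win (u2 - 1 + p) \<noteq> win (Suc (u2 - 1 + p))" by auto
        define j' where "j' = win (u2 + p)"
        have uj2: "u2 + p = S j'" using win_start[OF neq2] v1 ik unfolding j'_def u2_def S2 by simp
        have j'par: "j' mod 2 = k mod 2" using par[OF v1(3,4)] wv unfolding j'_def by simp
        have "j \<le> j'" unfolding j'_def j_def using S2 unfolding u_def u2_def by (intro win_mono) simp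
        hence "Suc j \<le> j'" using j'par jpar by presburger
        hence "S (Suc j) \<le> S j'" by (rule S_le)
        hence "L j \<le> L (Suc k)" using uj uj2 S2 unfolding u_def u2_def by (simp add: S_Suc)
        moreover have "L (Suc k) < L j" using L_smono j3 by (simp add: strict_mono_less)
        ultimately show ?thesis by simp
      qed
    qed
  qed
qed

end



lemma prefix_nth_eq: "prefix xs ys \<Longrightarrow> i < length xs \<Longrightarrow> xs ! i = ys ! i"
  by (auto simp: prefix_def nth_append)

lemma map_shift: "map f [a..<a+n] = map (\<lambda>j. f (a+j)) [0..<n]"
  by (induction n) auto

lemma prefix_upt: "r \<le> n \<Longrightarrow> prefix (map h [0..<r]) (map h [0..<n])"
proof -
  assume "r \<le> n"
  hence "[0..<n] = [0..<r] @ [r..<n]" using upt_add_eq_append[of 0 r "n - r"] by simp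
  thus ?thesis by (simp add: prefixI)
qed

lemma fp_split:
  assumes "frac_power_of Z X"
  shows "\<exists>Z'. Z = X @ Z' \<and> prefix Z' Z"
proof -
  obtain k Y where k: "k \<ge> 1" and pY: "prefix Y X" and Z: "Z = concat (replicate k X) @ Y"
    using assms unfolding frac_power_of_def by blast
  define A where "A = concat (replicate (k-1) X)"
  have kk: "replicate k X = X # replicate (k-1) X" using k by (cases k) auto
  have Z1: "Z = X @ (A @ Y)" unfolding Z A_def kk by simp
  obtain k0 where k0: "k = Suc k0" using k by (cases k) auto
  have "replicate k X = replicate k0 X @ [X]" unfolding k0 by (simp add: replicate_append_same)
  hence "concat (replicate k X) = A @ X" unfolding A_def k0 by simp
  hence "prefix (A @ X) Z" unfolding Z by simp
  moreover have "prefix (A @ Y) (A @ X)" using pY by simp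
  ultimately have "prefix (A @ Y) Z" using prefix_order.trans by blast
  with Z1 show ?thesis by blast
qed

lemma fp_period:
  assumes "frac_power_of Z X" "t + length X < length Z"
  shows "Z ! (t + length X) = Z ! t"
proof -
  obtain Z' where Z: "Z = X @ Z'" and p: "prefix Z' Z" using fp_split[OF assms(1)] by blast
  have tl: "t < length Z'" using assms(2) Z by simp
  have "Z ! (t + length X) = Z' ! t" unfolding Z by (simp add: nth_append)
  also have "\<dots> = Z ! t" using prefix_nth_eq[OF p tl] .
  finally show ?thesis .
qed

lemma fp_len: "frac_power_of Z X \<Longrightarrow> length X \<le> length Z"
  using fp_split by fastforce

lemma per_list:
  assumes "0 < p" "r \<le> p"
  shows "map (\<lambda>j. h (j mod p)) [0..<m*p + r] = concat (replicate m (map h [0..<p])) @ map h [0..<r]"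
proof (induction m)
  case 0
  show ?case using assms by (auto intro!: map_cong)
next
  case (Suc m)
  have "[0..<Suc m * p + r] = [0..<p] @ [p..<p + (m*p + r)]"
    using upt_add_eq_append[of 0 p "m*p+r"] by (simp add: add.assoc)
  moreover have "[p..<p + (m*p+r)] = map (\<lambda>i. i + p) [0..<m*p+r]"
    by (simp add: map_add_upt add.commute)
  moreover have "map (\<lambda>j. h (j mod p)) [0..<p] = map h [0..<p]" by (auto intro!: map_cong)
  ultimately have "map (\<lambda>j. h (j mod p)) [0..<Suc m * p + r] =
      map h [0..<p] @ map (\<lambda>j. h (j mod p)) [0..<m*p+r]" by (simp add: comp_def)
  then show ?case using Suc by simp
qed

context cx begin

lemma elem_le:
  assumes fp: "frac_power_of Z X" and oc: "occurs_in Z wd"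
  shows "real (length Z) / real (length X) \<le> \<alpha>"
proof -
  obtain i where Zi: "Z = map wd [i..<i + length Z]" using oc unfolding occurs_in_def by blast
  have Xne: "length X \<ge> 1" using fp unfolding frac_power_of_def by (cases X) auto
  define p where "p = length X"
  define R where "R = length Z - p"
  have nth: "Z ! t = wd (i+t)" if "t < length Z" for t
    using that by (subst Zi) simp
  have ag: "\<forall>t<R. wd (i+t) = wd (i+t+p)"
  proof (intro allI impI)
    fix t assume "t < R"
    hence t1: "t + p < length Z" unfolding R_def by simp
    have "wd (i+t) = Z ! t" using t1 nth by simp
    also have "\<dots> = Z ! (t + p)" using fp_period[OF fp] t1 unfolding p_def by simp
    also have "\<dots> = wd (i+t+p)" using nth[OF t1] by (simp add: add.assoc)
    finally show "wd (i+t) = wd (i+t+p)" .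
  qed
  have "real R + real p \<le> \<alpha> * real p" using run_bound[OF _ ag] Xne unfolding p_def by simp
  moreover have "length Z = R + p" using fp_len[OF fp] unfolding R_def p_def by simp
  ultimately have "real (length Z) \<le> \<alpha> * real p" by simp
  moreover have "real p > 0" using Xne unfolding p_def by linarith
  ultimately show ?thesis unfolding p_def by (simp add: pos_divide_le_eq)
qed

lemma elem_in:
  "\<exists>Z X. real (length Z) / real (length X) = real (L k) / real (P k) \<and> frac_power_of Z X \<and> occurs_in Z wd"
proof -
  define h where "h x = 2 * ee N x + k mod 2" for x
  have wdk: "wd (S k + j) = h (j mod P k)" if "j < L k" for j
  proof -
    have "win (S k + j) = k" using that by (intro win_in) auto
    thus ?thesis unfolding wd_def h_def by simp
  qed
  define Z where "Z = map wd [S k..<S k + L k]"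
  define X where "X = map wd [S k..<S k + P k]"
  have Z1: "Z = map (\<lambda>j. h (j mod P k)) [0..<L k]"
  proof -
    have "Z = map (\<lambda>j. wd (S k + j)) [0..<L k]" unfolding Z_def by (rule map_shift)
    also have "\<dots> = map (\<lambda>j. h (j mod P k)) [0..<L k]" by (rule map_cong) (auto simp: wdk)
    finally show ?thesis .
  qed
  have X1: "X = map h [0..<P k]"
  proof -
    have "X = map (\<lambda>j. wd (S k + j)) [0..<P k]" unfolding X_def by (rule map_shift)
    also have "\<dots> = map h [0..<P k]" using L_ge_P[of k]
      by (intro map_cong) (auto simp: wdk)
    finally show ?thesis .
  qed
  have Pp: "0 < P k" using P_pos[of k] by simp
  define m where "m = L k div P k"
  define r where "r = L k mod P k"
  have Lmr: "L k = m * P k + r" unfolding m_def r_def by (rule div_mult_mod_eq[symmetric])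
  have rP: "r \<le> P k" unfolding r_def using Pp by (simp add: less_imp_le)
  have m1: "m \<ge> 1" unfolding m_def using L_ge_P[of k] Pp
    by (simp add: Suc_le_eq div_greater_zero_iff)
  have "Z = concat (replicate m X) @ map h [0..<r]" unfolding Z1 X1 Lmr by (rule per_list[OF Pp rP])
  moreover have "prefix (map h [0..<r]) X" unfolding X1
    by (rule prefix_upt[OF rP])
  moreover have "X \<noteq> []" unfolding X1 using Pp by simp
  ultimately have fp: "frac_power_of Z X" unfolding frac_power_of_def using m1 by blast
  have oc: "occurs_in Z wd" unfolding occurs_in_def Z_def by auto
  have "length Z = L k" "length X = P k" unfolding Z_def X_def by simp_all
  with fp oc show ?thesis by (intro exI[of _ Z] exI[of _ X]) simp
qed

lemma crit: "critical_exponent wd = ereal \<alpha>"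
  unfolding critical_exponent_def
proof (rule Sup_eqI)
  fix y assume "y \<in> {ereal (real (length Z) / real (length X)) | Z X. frac_power_of Z X \<and> occurs_in Z wd}"
  then obtain Z X where "y = ereal (real (length Z) / real (length X))" "frac_power_of Z X" "occurs_in Z wd" by blast
  thus "y \<le> ereal \<alpha>" using elem_le by simp
next
  fix y assume ub: "\<And>z. z \<in> {ereal (real (length Z) / real (length X)) | Z X. frac_power_of Z X \<and> occurs_in Z wd} \<Longrightarrow> z \<le> y"
  have yk: "ereal (real (L k) / real (P k)) \<le> y" for k
  proof -
    obtain Z X where "real (length Z) / real (length X) = real (L k) / real (P k)" "frac_power_of Z X" "occurs_in Z wd"
      using elem_in[of k] by blast
    hence "ereal (real (L k) / real (P k)) \<in> {ereal (real (length Z) / real (length X)) | Z X. frac_power_of Z X \<and> occurs_in Z wd}"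
      by force
    thus ?thesis by (rule ub)
  qed
  have approx: "\<alpha> - 1 / real (P k) < real (L k) / real (P k)" for k
  proof -
    have Pp: "real (P k) > 0" using P_pos[of k] by simp
    have "\<alpha> * real (P k) - 1 < real (L k)" by (rule L_gt)
    hence "(\<alpha> * real (P k) - 1) / real (P k) < real (L k) / real (P k)" using Pp by (simp add: divide_strict_right_mono)
    thus ?thesis using Pp by (simp add: diff_divide_distrib)
  qed
  have Pk: "real k < real (P k)" for k
  proof -
    have "k < 2^k" by (rule less_exp)
    also have "(2::nat)^k \<le> 2^(N*k)" using Npos by (intro power_increasing) auto
    finally show ?thesis unfolding P_def by simp
  qed
  show "ereal \<alpha> \<le> y"
  proof (cases y)
    case (real y')
    have "\<alpha> \<le> y'"
    proof (rule field_le_epsilon)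
      fix e :: real assume e: "0 < e"
      obtain k where k: "1 / e < real k" using reals_Archimedean2 by blast
      have "1 / e < real (P k)" using k Pk[of k] by linarith
      hence "1 / real (P k) < e" using e by (simp add: divide_less_eq mult.commute)
      moreover have "real (L k) / real (P k) \<le> y'" using yk[of k] real by simp
      ultimately show "\<alpha> \<le> y' + e" using approx[of k] by linarith
    qed
    then show ?thesis using real by simp
  next
    case PInf then show ?thesis by simp
  next
    case MInf then show ?thesis using yk[of 0] by simp
  qed
qed

end

theorem theorem2:
  fixes \<alpha> :: real
  assumes "\<alpha> > 1"
  shows "\<exists>w :: nat \<Rightarrow> nat. finite (range w) \<and> critical_exponent w = ereal \<alpha>"
proof -
  obtain N :: nat where N: "2*\<alpha>/(\<alpha>-1) + \<alpha> < real N" using reals_Archimedean2 by blast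
  have am: "\<alpha> - 1 > 0" using assms by simp
  have q: "2*\<alpha>/(\<alpha>-1) > 0" using assms am by simp
  have "N < 2^N" by (rule less_exp)
  hence "real N < real (2^N)" by (simp only: of_nat_less_iff)
  hence Nexp: "real N < 2^N" by simp
  have N1: "2^N > \<alpha>" using N Nexp q by linarith
  have "2*\<alpha>/(\<alpha>-1) \<le> 2^N" using N Nexp assms by linarith
  hence "(\<alpha>-1) * (2*\<alpha>/(\<alpha>-1)) \<le> (\<alpha>-1) * 2^N" using am by (intro mult_left_mono) auto
  hence N2: "(\<alpha>-1)*2^N \<ge> 2*\<alpha>" using am by simp
  have "real N > 1" using N q assms by linarith
  hence Npos: "N \<ge> 1" by simp
  interpret cx \<alpha> N using assms N1 N2 Npos by unfold_locales auto
  have "range wd \<subseteq> {..2 * 2^(N+1) + 1}" using wd_bound by blast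
  hence "finite (range wd)" by (rule finite_subset) simp
  with crit show ?thesis by blast
qed


end
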